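(* For one-variable functions $f,g,b$ consider the lattice equation $$(\ast)\qquad u_{,t}=b\bigl(-f(u-u_{-2})+g(u_{-1}-u)-g(u-u_1)\bigr)+b\bigl(-f(u_2-u)-g(u_{-1}-u)+g(u-u_1)\bigr).$$ For the following choices (with $\gamma$ a nonzero constant), equation $(\ast)$ is point equivalent (related by an invertible change of dependent variable $\tilde u(n)=\phi(u(n))$ applied at every site, such as $e^u\mapsto u$ or an affine rescaling, together with a constant rescaling of $t$) to the indicated equation: Case (A): $f(x)=-2\gamma/x$, $g(x)=\gamma/x$, $b(x)=1/x$; equivalent to $$\tfrac12u_{,t}=\frac{1}{\frac{2}{u_2-u}+\frac{1}{u-u_1}+\frac{1}{u-u_{-1}}}-\frac{1}{\frac{2}{u_{-2}-u}+\frac{1}{u-u_1}+\frac{1}{u-u_{-1}}}.$$ Case (C): $f(x)=\log\frac{x-2\gamma}{x+2\gamma}$, $g(x)=\log\frac{x+\gamma}{x-\gamma}$, $b(x)=\frac1{e^x-1}$; equivalent to $$\tfrac14u_{,t}=\frac{1}{\frac{(u_2-u+2)(u_1-u-1)(u_{-1}-u-1)}{(u_2-u-2)(u_1-u+1)(u_{-1}-u+1)}-1}+\frac{1}{\frac{(u_{-2}-u-2)(u_1-u+1)(u_{-1}-u+1)}{(u_{-2}-u+2)(u_1-u-1)(u_{-1}-u-1)}-1}.$$ Case (D): $f(x)=-\log(1+1/x)$, $g(x)=\log x$, $b(x)=\frac1{e^x+1}$; equivalent to $$u_{,t}=\frac{u-u_{-1}}{u_1-u_{-1}+\frac{u-u_1}{u-u_2}}-\frac{u-u_1}{u_1-u_{-1}+\frac{u-u_{-1}}{u-u_{-2}}}.$$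 Case (F): $f(x)=\log(e^{-x}-1)$, $g(x)=\log(e^x-1)$, $b(x)=e^{-x}$; equivalent to $$u_{,t}=u\frac{(1-\frac{u}{u_2})(1-\frac{u_{-1}}{u})}{1-\frac{u}{u_1}}+u\frac{(1-\frac{u_{-2}}{u})(1-\frac{u}{u_1})}{1-\frac{u_{-1}}{u}}.$$ Case (H) at parameter $0$: $f(x)=\log(e^{-x}-1)$, $g(x)=\log(e^x+1)$, $b(x)=e^{-x}$; equivalent to $$u_{,t}=u\frac{(1-\frac{u}{u_2})(1+\frac{u_{-1}}{u})}{1+\frac{u}{u_1}}+u\frac{(1-\frac{u_{-2}}{u})(1+\frac{u}{u_1})}{1+\frac{u_{-1}}{u}}.$$ Case (I): $f(x)=\log\frac{\gamma^{-2}e^x-1}{e^x-\gamma^{-2}}$, $g(x)=\log\frac{\gamma e^x-1}{e^x-\gamma}$, $b(x)=\frac1{e^x-1}$; equivalent to $$-\frac{1}{1+\gamma^2}u_{,t}=\frac{(u-\gamma u_{-1})(u-\gamma u_1)(u-\gamma^{-2}u_2)}{(\gamma u_{-1}-u)(\gamma u_1-u_2)-(\gamma u-u_1)(u_{-1}-\gamma u_2)}-\frac{(u-\gamma^{-1}u_{-1})(u-\gamma^{-1}u_1)(u-\gamma^2u_{-2})}{(\gamma u_{-2}-u_{-1})(\gamma u-u_1)-(\gamma u_{-1}-u)(u_{-2}-\gamma u_1)}.$$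
   Context: Here $u=u(n,t)$, $n\in\mathbb Z$, $u_m=u(n+m,t)$, and $u_{,t}=\partial u/\partial t$. Equation $(\ast)$ is the scalar second-order lattice equation obtained from the sum of two commuting continuous symmetries of a shift-invariant 7-point equation on the triangular lattice. *)

theory Defs
  imports "HOL-Analysis.Analysis"
begin

text \<open>A configuration around a lattice site is a function v :: int \<Rightarrow> real with
  v m = u_m = u(n+m,t); so v 0 = u, v 1 = u_1, v (-1) = u_{-1}, etc.\<close>

definition lattice_rhs ::
  "(real \<Rightarrow> real) \<Rightarrow> (real \<Rightarrow> real) \<Rightarrow> (real \<Rightarrow> real) \<Rightarrow> (int \<Rightarrow> real) \<Rightarrow> real" where
  "lattice_rhs f g b v =
     b (- f (v 0 - v (-2)) + g (v (-1) - v 0) - g (v 0 - v 1))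
   + b (- f (v 2 - v 0) - g (v (-1) - v 0) + g (v 0 - v 1))"

definition admissible ::
  "(real \<Rightarrow> real) \<Rightarrow> real set \<Rightarrow> (real \<Rightarrow> real) \<Rightarrow> real set \<Rightarrow> real set \<Rightarrow> (int \<Rightarrow> real) \<Rightarrow> bool" where
  "admissible f Df g Dg Db v \<longleftrightarrow>
     v 0 - v (-2) \<in> Df \<and> v 2 - v 0 \<in> Df \<and> v (-1) - v 0 \<in> Dg \<and> v 0 - v 1 \<in> Dg \<and>
     - f (v 0 - v (-2)) + g (v (-1) - v 0) - g (v 0 - v 1) \<in> Db \<and>
     - f (v 2 - v 0) - g (v (-1) - v 0) + g (v 0 - v 1) \<in> Db"

definition solves_lattice ::
  "(real \<Rightarrow> real) \<Rightarrow> (real \<Rightarrow> real) \<Rightarrow> (real \<Rightarrow> real) \<Rightarrow> (int \<Rightarrow> real \<Rightarrow> real) \<Rightarrow> bool" where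
  "solves_lattice f g b u \<longleftrightarrow>
     (\<forall>n t. ((\<lambda>s. u n s) has_real_derivative lattice_rhs f g b (\<lambda>m. u (n + m) t)) (at t))"

definition solves_target ::
  "real \<Rightarrow> ((int \<Rightarrow> real) \<Rightarrow> real) \<Rightarrow> (int \<Rightarrow> real \<Rightarrow> real) \<Rightarrow> bool" where
  "solves_target k T w \<longleftrightarrow>
     (\<forall>n s. \<exists>D. ((\<lambda>r. w n r) has_real_derivative D) (at s) \<and> k * D = T (\<lambda>m. w (n + m) s))"

definition point_equivalent ::
  "(real \<Rightarrow> real) \<Rightarrow> real set \<Rightarrow> (real \<Rightarrow> real) \<Rightarrow> real set \<Rightarrow> (real \<Rightarrow> real) \<Rightarrow> real set
   \<Rightarrow> real \<Rightarrow> ((int \<Rightarrow> real) \<Rightarrow> real) \<Rightarrow> bool" where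
  "point_equivalent f Df g Dg b Db k T \<longleftrightarrow>
     (\<exists>\<phi> \<phi>' c. c \<noteq> 0 \<and> inj \<phi> \<and>
        (\<forall>x. (\<phi> has_real_derivative \<phi>' x) (at x) \<and> \<phi>' x \<noteq> 0) \<and>
        (\<forall>u. (\<forall>n t. admissible f Df g Dg Db (\<lambda>m. u (n + m) t)) \<longrightarrow>
             (solves_lattice f g b u \<longleftrightarrow>
              solves_target k T (\<lambda>n s. \<phi> (u n (c * s))))))"

end

theory Submission
  imports Defs
begin


lemma pe_intro:
  fixes \<phi> \<psi> \<phi>' :: "real \<Rightarrow> real" and c k :: real
  assumes c: "c \<noteq> 0" and k: "k \<noteq> 0"
    and der: "\<And>x. (\<phi> has_real_derivative \<phi>' x) (at x)" and nz: "\<And>x. \<phi>' x \<noteq> 0"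
    and inv: "\<And>x. \<psi> (\<phi> x) = x" and cont: "\<And>x. isCont \<psi> (\<phi> x)"
    and rng: "\<And>x. \<exists>a b. a < \<phi> x \<and> \<phi> x < b \<and> (\<forall>y. a < y \<and> y < b \<longrightarrow> \<phi> (\<psi> y) = y)"
    and ident: "\<And>v. admissible f Df g Dg Db v \<Longrightarrow>
        T (\<lambda>m. \<phi> (v m)) = k * c * \<phi>' (v 0) * lattice_rhs f g b v"
  shows "point_equivalent f Df g Dg b Db k T"
  unfolding point_equivalent_def
proof (intro exI conjI allI impI)
  show "c \<noteq> 0" by fact
  show "inj \<phi>" by (metis inv injI)
  fix x show "(\<phi> has_real_derivative \<phi>' x) (at x)" by fact
  show "\<phi>' x \<noteq> 0" by fact
next
  fix u :: "int \<Rightarrow> real \<Rightarrow> real"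
  assume adm: "\<forall>n t. admissible f Df g Dg Db (\<lambda>m. u (n + m) t)"
  show "solves_lattice f g b u = solves_target k T (\<lambda>n s. \<phi> (u n (c * s)))"
  proof
    assume L: "solves_lattice f g b u"
    show "solves_target k T (\<lambda>n s. \<phi> (u n (c * s)))"
      unfolding solves_target_def
    proof (intro allI)
      fix n s
      let ?R = "lattice_rhs f g b (\<lambda>m. u (n + m) (c * s))"
      have d1: "((\<lambda>r. u n (c * r)) has_real_derivative ?R * c) (at s)"
      proof -
        have "(u n has_real_derivative ?R) (at (c * s))" using L unfolding solves_lattice_def by simp
        moreover have "((\<lambda>r. c * r) has_real_derivative c) (at s)"
          by (auto intro!: derivative_eq_intros)
        ultimately have "(u n \<circ> (\<lambda>r. c * r) has_real_derivative ?R * c) (at s)"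
          by (rule DERIV_chain)
        thus ?thesis by (simp add: o_def)
      qed
      have "((\<phi> \<circ> (\<lambda>r. u n (c * r))) has_real_derivative \<phi>' (u n (c * s)) * (?R * c)) (at s)"
        using der d1 by (rule DERIV_chain)
      hence "((\<lambda>r. \<phi> (u n (c * r))) has_real_derivative \<phi>' (u n (c * s)) * (?R * c)) (at s)"
        by (simp add: o_def)
      moreover have "k * (\<phi>' (u n (c * s)) * (?R * c)) = T (\<lambda>m. \<phi> (u (n + m) (c * s)))"
        using ident[of "\<lambda>m. u (n + m) (c * s)"] adm by simp
      ultimately show "\<exists>D. ((\<lambda>r. \<phi> (u n (c * r))) has_real_derivative D) (at s) \<and>
          k * D = T (\<lambda>m. \<phi> (u (n + m) (c * s)))" by blast
    qed
  next
    assume Rt: "solves_target k T (\<lambda>n s. \<phi> (u n (c * s)))"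
    show "solves_lattice f g b u"
      unfolding solves_lattice_def
    proof (intro allI)
      fix n t
      let ?R = "lattice_rhs f g b (\<lambda>m. u (n + m) t)"
      have ct: "c * (t / c) = t" using c by simp
      obtain D where D: "((\<lambda>r. \<phi> (u n (c * r))) has_real_derivative D) (at (t / c))"
        and kD: "k * D = T (\<lambda>m. \<phi> (u (n + m) t))"
        using Rt unfolding solves_target_def by (metis ct)
      have "T (\<lambda>m. \<phi> (u (n + m) t)) = k * c * \<phi>' (u n t) * ?R"
        using ident[of "\<lambda>m. u (n + m) t"] adm by simp
      with kD k have DD: "D = c * \<phi>' (u n t) * ?R" by simp
      have d2: "((\<lambda>r. \<phi> (u n (c * r))) \<circ> (\<lambda>r. r / c) has_real_derivative D * (1 / c)) (at t)"
        by (rule DERIV_chain) (use c in \<open>auto intro!: derivative_eq_intros D\<close>)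
      have e: "((\<lambda>r. \<phi> (u n (c * r))) \<circ> (\<lambda>r. r / c)) = (\<lambda>r. \<phi> (u n r))"
        using c by (auto simp: o_def)
      have d3: "((\<lambda>r. \<phi> (u n r)) has_real_derivative \<phi>' (u n t) * ?R) (at t)"
        using d2 unfolding e DD using c by simp
      obtain a b where ab: "a < \<phi> (u n t)" "\<phi> (u n t) < b" "\<forall>y. a < y \<and> y < b \<longrightarrow> \<phi> (\<psi> y) = y"
        using rng by blast
      have di: "(\<psi> has_real_derivative inverse (\<phi>' (u n t))) (at (\<phi> (u n t)))"
        by (rule DERIV_inverse_function[where a=a and b=b]) (use ab inv cont nz der in auto)
      have "(\<psi> \<circ> (\<lambda>r. \<phi> (u n r)) has_real_derivative inverse (\<phi>' (u n t)) * (\<phi>' (u n t) * ?R)) (at t)"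
        using di d3 by (rule DERIV_chain)
      moreover have "\<psi> \<circ> (\<lambda>r. \<phi> (u n r)) = u n" using inv by (auto simp: o_def)
      ultimately show "(u n has_real_derivative ?R) (at t)" using nz[of "u n t"] by (simp add: mult.assoc[symmetric])
    qed
  qed
qed


lemma div_swap: fixes x a b :: real shows "x / (a - b) = - (x / (b - a))"
  by (metis minus_diff_eq divide_minus_right)

lemma div_swap2: fixes x y a b :: real shows "(x - y) / (a - b) = (y - x) / (b - a)"
  by (metis minus_diff_eq minus_divide_divide)

lemma A_pt:
  fixes \<gamma> a p u q e :: real
  assumes "\<gamma> \<noteq> 0"
  shows "1 / (2 / (e - u) + 1 / (u - q) + 1 / (u - p)) - 1 / (2 / (a - u) + 1 / (u - q) + 1 / (u - p))
    = \<gamma> * (1 / (2 * \<gamma> / (u - a) + \<gamma> / (p - u) - \<gamma> / (u - q)) + 1 / (2 * \<gamma> / (e - u) - \<gamma> / (p - u) + \<gamma> / (u - q)))"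
proof -
  have s: "2 / (a - u) = - (2 / (u - a))" "1 / (u - p) = - (1 / (p - u))" "\<gamma> / (u - p) = - (\<gamma> / (p - u))"
    using div_swap by blast+
  have 1: "2 * \<gamma> / (u - a) + \<gamma> / (p - u) - \<gamma> / (u - q) = - (\<gamma> * (2 / (a - u) + 1 / (u - q) + 1 / (u - p)))"
    unfolding s by (simp add: algebra_simps add_divide_distrib)
  have 2: "2 * \<gamma> / (e - u) - \<gamma> / (p - u) + \<gamma> / (u - q) = \<gamma> * (2 / (e - u) + 1 / (u - q) + 1 / (u - p))"
    unfolding s by (simp add: algebra_simps add_divide_distrib)
  have g: "\<And>S1 S2. \<gamma> * (1 / (- (\<gamma> * S1)) + 1 / (\<gamma> * S2)) = 1 / S2 - 1 / S1"
    using assms by (simp add: field_simps)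
  show ?thesis unfolding 1 2 g by simp
qed

lemma caseA:
  fixes \<gamma> :: real assumes g: "\<gamma> \<noteq> 0"
  shows "point_equivalent (\<lambda>x. - 2 * \<gamma> / x) {x. x \<noteq> 0} (\<lambda>x. \<gamma> / x) {x. x \<noteq> 0}
     (\<lambda>x. 1 / x) {x. x \<noteq> 0} (1/2)
     (\<lambda>v. 1 / (2 / (v 2 - v 0) + 1 / (v 0 - v 1) + 1 / (v 0 - v (-1)))
         - 1 / (2 / (v (-2) - v 0) + 1 / (v 0 - v 1) + 1 / (v 0 - v (-1))))"
proof (rule pe_intro[where \<phi>="\<lambda>x. x" and \<phi>'="\<lambda>x. 1" and \<psi>="\<lambda>x. x" and c="2*\<gamma>"])
  fix v :: "int \<Rightarrow> real"
  show "1 / (2 / (v 2 - v 0) + 1 / (v 0 - v 1) + 1 / (v 0 - v (-1)))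
         - 1 / (2 / (v (-2) - v 0) + 1 / (v 0 - v 1) + 1 / (v 0 - v (-1))) =
    1/2 * (2 * \<gamma>) * 1 * lattice_rhs (\<lambda>x. - 2 * \<gamma> / x) (\<lambda>x. \<gamma> / x) (\<lambda>x. 1 / x) v"
    unfolding lattice_rhs_def using A_pt[OF g, of "v 2" "v 0" "v 1" "v (-1)" "v (-2)"]
    by simp
qed (use g in \<open>auto intro!: derivative_eq_intros simp: lt_ex gt_ex\<close>)


lemma D_pt:
  fixes a p u q e :: real
  assumes h: "u - a \<noteq> 0" "1 + 1 / (u - a) > 0" "e - u \<noteq> 0" "1 + 1 / (e - u) > 0" "p - u > 0" "u - q > 0"
  shows "(u - p) / (q - p + (u - q) / (u - e)) - (u - q) / (q - p + (u - p) / (u - a)) =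
    1 / (exp (ln (1 + 1 / (u - a)) + ln (p - u) - ln (u - q)) + 1) +
    1 / (exp (ln (1 + 1 / (e - u)) - ln (p - u) + ln (u - q)) + 1)"
proof -
  have eX: "exp (ln (1 + 1 / (u - a)) + ln (p - u) - ln (u - q)) = (1 + 1 / (u - a)) * (p - u) / (u - q)"
    using h by (simp add: exp_add exp_diff)
  have eY: "exp (ln (1 + 1 / (e - u)) - ln (p - u) + ln (u - q)) = (1 + 1 / (e - u)) * (u - q) / (p - u)"
    using h by (simp add: exp_add exp_diff)
  have nz: "u - q \<noteq> 0" "p - u \<noteq> 0" using h by auto
  have m1: "(u - q) * ((1 + 1 / (u - a)) * (p - u) / (u - q) + 1) = (1 + 1 / (u - a)) * (p - u) + (u - q)"
    using nz by (simp add: distrib_left)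
  have m2: "(p - u) * ((1 + 1 / (e - u)) * (u - q) / (p - u) + 1) = (1 + 1 / (e - u)) * (u - q) + (p - u)"
    using nz by (simp add: distrib_left)
  have d1: "q - p + (u - p) / (u - a) = - ((u - q) * ((1 + 1 / (u - a)) * (p - u) / (u - q) + 1))"
    unfolding m1 by (simp add: algebra_simps diff_divide_distrib add_divide_distrib)
  have d2: "q - p + (u - q) / (u - e) = - ((p - u) * ((1 + 1 / (e - u)) * (u - q) / (p - u) + 1))"
    unfolding m2 using div_swap[of "u - q" u e] by (simp add: algebra_simps)
  have p1: "(1 + 1 / (u - a)) * (p - u) / (u - q) + 1 > 0" using h by (simp add: add_pos_pos)
  have p2: "(1 + 1 / (e - u)) * (u - q) / (p - u) + 1 > 0" using h by (simp add: add_pos_pos)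
  have fin: "\<And>Z. - ((u - p) / ((p - u) * Z)) = 1 / Z"
  proof -
    fix Z :: real
    have "u - p = - (p - u)" by simp
    then show "- ((u - p) / ((p - u) * Z)) = 1 / Z" using nz by (cases "Z = 0") (simp_all add: field_simps)
  qed
  show ?thesis unfolding eX eY d1 d2 using nz p1 p2 fin[of "(1 + 1 / (e - u)) * (u - q) / (p - u) + 1"] by simp
qed

lemma caseD:
  shows "point_equivalent
     (\<lambda>x. - ln (1 + 1 / x)) {x. x \<noteq> 0 \<and> 1 + 1 / x > 0}
     (\<lambda>x. ln x) {x. x > 0}
     (\<lambda>x. 1 / (exp x + 1)) UNIV 1
     (\<lambda>v. (v 0 - v (-1)) / (v 1 - v (-1) + (v 0 - v 1) / (v 0 - v 2))
         - (v 0 - v 1) / (v 1 - v (-1) + (v 0 - v (-1)) / (v 0 - v (-2))))"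
proof (rule pe_intro[where \<phi>="\<lambda>x. x" and \<phi>'="\<lambda>x. 1" and \<psi>="\<lambda>x. x" and c="1"])
  fix v :: "int \<Rightarrow> real"
  assume "admissible (\<lambda>x. - ln (1 + 1 / x)) {x. x \<noteq> 0 \<and> 1 + 1 / x > 0} (\<lambda>x. ln x) {x. x > 0} UNIV v"
  then show "(v 0 - v (-1)) / (v 1 - v (-1) + (v 0 - v 1) / (v 0 - v 2))
         - (v 0 - v 1) / (v 1 - v (-1) + (v 0 - v (-1)) / (v 0 - v (-2))) =
    1 * 1 * 1 * lattice_rhs (\<lambda>x. - ln (1 + 1 / x)) (\<lambda>x. ln x) (\<lambda>x. 1 / (exp x + 1)) v"
    unfolding lattice_rhs_def admissible_def using D_pt[of "v 0" "v (-2)" "v 2" "v (-1)" "v 1"]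
    by simp
qed (auto intro!: derivative_eq_intros simp: lt_ex gt_ex)


lemma exp_pe:
  fixes f g b :: "real \<Rightarrow> real" and c k :: real and T
  assumes "c \<noteq> 0" "k \<noteq> 0"
    and "\<And>v. admissible f Df g Dg Db v \<Longrightarrow> T (\<lambda>m. exp (v m)) = k * c * exp (v 0) * lattice_rhs f g b v"
  shows "point_equivalent f Df g Dg b Db k T"
proof (rule pe_intro[where \<phi>=exp and \<phi>'=exp and \<psi>=ln and c=c])
  fix x :: real
  show "\<exists>a b. a < exp x \<and> exp x < b \<and> (\<forall>y. a < y \<and> y < b \<longrightarrow> exp (ln y) = y)"
    by (rule exI[of _ 0], rule exI[of _ "exp x + 1"]) auto
  show "isCont ln (exp x)" by (rule isCont_ln) simp
qed (use assms in \<open>auto intro!: derivative_eq_intros\<close>)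

lemma F_rat:
  fixes U P Q A E :: real
  assumes "U > 0" "P > 0" "Q > 0" "A > 0" "E > 0" "P \<noteq> U" "U \<noteq> Q"
  shows "U * ((1 - U / E) * (1 - P / U)) / (1 - U / Q) + U * ((1 - A / U) * (1 - U / Q)) / (1 - P / U)
    = 1 * (-1) * U * ((A / U - 1) * (U / Q - 1) / (P / U - 1) + (U / E - 1) * (P / U - 1) / (U / Q - 1))"
proof -
  have "1 - U / Q \<noteq> 0" "1 - P / U \<noteq> 0" "U / Q - 1 \<noteq> 0" "P / U - 1 \<noteq> 0" using assms by (auto simp: field_simps)
  then show ?thesis using assms by (simp add: field_simps)
qed

lemma F_pt:
  fixes a p u q e :: real
  assumes h: "exp (- (u - a)) - 1 > 0" "exp (- (e - u)) - 1 > 0" "exp (p - u) - 1 > 0" "exp (u - q) - 1 > 0"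
  shows "exp u * ((1 - exp u / exp e) * (1 - exp p / exp u)) / (1 - exp u / exp q)
       + exp u * ((1 - exp a / exp u) * (1 - exp u / exp q)) / (1 - exp p / exp u)
    = 1 * (-1) * exp u * (exp (- (- ln (exp (- (u - a)) - 1) + ln (exp (p - u) - 1) - ln (exp (u - q) - 1)))
                         + exp (- (- ln (exp (- (e - u)) - 1) - ln (exp (p - u) - 1) + ln (exp (u - q) - 1))))"
proof -
  have e1: "exp (- (- ln (exp (- (u - a)) - 1) + ln (exp (p - u) - 1) - ln (exp (u - q) - 1)))
     = (exp (- (u - a)) - 1) * (exp (u - q) - 1) / (exp (p - u) - 1)"
    using h by (simp add: exp_add exp_diff exp_minus field_simps)
  have e2: "exp (- (- ln (exp (- (e - u)) - 1) - ln (exp (p - u) - 1) + ln (exp (u - q) - 1)))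
     = (exp (- (e - u)) - 1) * (exp (p - u) - 1) / (exp (u - q) - 1)"
    using h by (simp add: exp_add exp_diff exp_minus field_simps)
  have x: "exp (- (u - a)) = exp a / exp u" "exp (- (e - u)) = exp u / exp e"
     "exp (p - u) = exp p / exp u" "exp (u - q) = exp u / exp q"
    by (simp_all add: exp_diff exp_minus)
  have ne: "exp p \<noteq> exp u" "exp u \<noteq> exp q" using h by auto
  show ?thesis unfolding e1 e2 unfolding x using F_rat[OF exp_gt_zero exp_gt_zero exp_gt_zero exp_gt_zero exp_gt_zero ne] by simp
qed

lemma caseF:
  shows "point_equivalent
     (\<lambda>x. ln (exp (- x) - 1)) {x. exp (- x) - 1 > 0}
     (\<lambda>x. ln (exp x - 1)) {x. exp x - 1 > 0}
     (\<lambda>x. exp (- x)) UNIV 1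
     (\<lambda>v. v 0 * ((1 - v 0 / v 2) * (1 - v (-1) / v 0)) / (1 - v 0 / v 1)
         + v 0 * ((1 - v (-2) / v 0) * (1 - v 0 / v 1)) / (1 - v (-1) / v 0))"
proof (rule exp_pe[where c="-1"])
  fix v :: "int \<Rightarrow> real"
  assume "admissible (\<lambda>x. ln (exp (- x) - 1)) {x. exp (- x) - 1 > 0} (\<lambda>x. ln (exp x - 1)) {x. exp x - 1 > 0} UNIV v"
  then show "exp (v 0) * ((1 - exp (v 0) / exp (v 2)) * (1 - exp (v (-1)) / exp (v 0))) / (1 - exp (v 0) / exp (v 1))
         + exp (v 0) * ((1 - exp (v (-2)) / exp (v 0)) * (1 - exp (v 0) / exp (v 1))) / (1 - exp (v (-1)) / exp (v 0))
     = 1 * (-1) * exp (v 0) * lattice_rhs (\<lambda>x. ln (exp (- x) - 1)) (\<lambda>x. ln (exp x - 1)) (\<lambda>x. exp (- x)) v"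
    unfolding lattice_rhs_def admissible_def using F_pt[of "v 0" "v (-2)" "v 2" "v (-1)" "v 1"]
    by simp
qed simp_all


lemma H_rat:
  fixes U P Q A E :: real
  assumes "U > 0" "P > 0" "Q > 0" "A > 0" "E > 0"
  shows "U * ((1 - U / E) * (1 + P / U)) / (1 + U / Q) + U * ((1 - A / U) * (1 + U / Q)) / (1 + P / U)
    = 1 * (-1) * U * ((A / U - 1) * (U / Q + 1) / (P / U + 1) + (U / E - 1) * (P / U + 1) / (U / Q + 1))"
proof -
  have r: "1 - U / E = - (U / E - 1)" "1 - A / U = - (A / U - 1)" "1 + P / U = P / U + 1" "1 + U / Q = U / Q + 1"
    by simp_all
  show ?thesis unfolding r by (simp add: algebra_simps)
qed

lemma H_pt:
  fixes a p u q e :: real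
  assumes h: "exp (- (u - a)) - 1 > 0" "exp (- (e - u)) - 1 > 0"
  shows "exp u * ((1 - exp u / exp e) * (1 + exp p / exp u)) / (1 + exp u / exp q)
       + exp u * ((1 - exp a / exp u) * (1 + exp u / exp q)) / (1 + exp p / exp u)
    = 1 * (-1) * exp u * (exp (- (- ln (exp (- (u - a)) - 1) + ln (exp (p - u) + 1) - ln (exp (u - q) + 1)))
                         + exp (- (- ln (exp (- (e - u)) - 1) - ln (exp (p - u) + 1) + ln (exp (u - q) + 1))))"
proof -
  have h2: "exp (p - u) + 1 > 0" "exp (u - q) + 1 > 0" by (auto intro: add_pos_pos)
  have e1: "exp (- (- ln (exp (- (u - a)) - 1) + ln (exp (p - u) + 1) - ln (exp (u - q) + 1)))
     = (exp (- (u - a)) - 1) * (exp (u - q) + 1) / (exp (p - u) + 1)"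
    using h h2 by (simp add: exp_add exp_diff exp_minus field_simps)
  have e2: "exp (- (- ln (exp (- (e - u)) - 1) - ln (exp (p - u) + 1) + ln (exp (u - q) + 1)))
     = (exp (- (e - u)) - 1) * (exp (p - u) + 1) / (exp (u - q) + 1)"
    using h h2 by (simp add: exp_add exp_diff exp_minus field_simps)
  have x: "exp (- (u - a)) = exp a / exp u" "exp (- (e - u)) = exp u / exp e"
     "exp (p - u) = exp p / exp u" "exp (u - q) = exp u / exp q"
    by (simp_all add: exp_diff exp_minus)
  show ?thesis unfolding e1 e2 unfolding x using H_rat[OF exp_gt_zero exp_gt_zero exp_gt_zero exp_gt_zero exp_gt_zero] by simp
qed

lemma caseH:
  shows "point_equivalent
     (\<lambda>x. ln (exp (- x) - 1)) {x. exp (- x) - 1 > 0}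
     (\<lambda>x. ln (exp x + 1)) {x. exp x + 1 > 0}
     (\<lambda>x. exp (- x)) UNIV 1
     (\<lambda>v. v 0 * ((1 - v 0 / v 2) * (1 + v (-1) / v 0)) / (1 + v 0 / v 1)
         + v 0 * ((1 - v (-2) / v 0) * (1 + v 0 / v 1)) / (1 + v (-1) / v 0))"
proof (rule exp_pe[where c="-1"])
  fix v :: "int \<Rightarrow> real"
  assume "admissible (\<lambda>x. ln (exp (- x) - 1)) {x. exp (- x) - 1 > 0} (\<lambda>x. ln (exp x + 1)) {x. exp x + 1 > 0} UNIV v"
  then show "exp (v 0) * ((1 - exp (v 0) / exp (v 2)) * (1 + exp (v (-1)) / exp (v 0))) / (1 + exp (v 0) / exp (v 1))
         + exp (v 0) * ((1 - exp (v (-2)) / exp (v 0)) * (1 + exp (v 0) / exp (v 1))) / (1 + exp (v (-1)) / exp (v 0))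
     = 1 * (-1) * exp (v 0) * lattice_rhs (\<lambda>x. ln (exp (- x) - 1)) (\<lambda>x. ln (exp x + 1)) (\<lambda>x. exp (- x)) v"
    unfolding lattice_rhs_def admissible_def using H_pt[of "v 0" "v (-2)" "v 2" "v (-1)" "v 1"]
    by simp
qed simp_all


lemma G: fixes x c d g :: real assumes "g \<noteq> 0"
  shows "(x / g + c) / (x / g + d) = (x + c * g) / (x + d * g)"
proof -
  have "x / g + c = (x + c * g) / g" "x / g + d = (x + d * g) / g" using assms by (simp_all add: field_simps)
  then show ?thesis using assms by simp
qed
lemma Gd: fixes a u c d g :: real assumes "g \<noteq> 0"
  shows "(a / g - u / g + c) / (a / g - u / g + d) = (a - u + c * g) / (a - u + d * g)"
  using G[OF assms, of "a - u" c d] by (simp add: diff_divide_distrib)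
lemma negfrac: fixes x y :: real shows "(- x) / (- y) = x / y" by simp

lemma cFA: fixes a u g :: real assumes "g \<noteq> 0"
  shows "(a / g - u / g - 2) / (a / g - u / g + 2) = 1 / ((u - a - 2 * g) / (u - a + 2 * g))"
  using Gd[OF assms, of a u "-2" 2] negfrac[of "u - a + 2 * g" "u - a - 2 * g"] by (simp add: algebra_simps)
lemma cFQ: fixes q u g :: real assumes "g \<noteq> 0"
  shows "(q / g - u / g + 1) / (q / g - u / g - 1) = 1 / ((u - q + g) / (u - q - g))"
  using Gd[OF assms, of q u 1 "-1"] negfrac[of "u - q - g" "u - q + g"] by (simp add: algebra_simps)
lemma cFP: fixes p u g :: real assumes "g \<noteq> 0"
  shows "(p / g - u / g + 1) / (p / g - u / g - 1) = (p - u + g) / (p - u - g)"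
  using Gd[OF assms, of p u 1 "-1"] by (simp add: algebra_simps)
lemma cFE: fixes e u g :: real assumes "g \<noteq> 0"
  shows "(e / g - u / g + 2) / (e / g - u / g - 2) = 1 / ((e - u - 2 * g) / (e - u + 2 * g))"
  using Gd[OF assms, of e u 2 "-2"] by (simp add: algebra_simps)
lemma cFQ': fixes q u g :: real assumes "g \<noteq> 0"
  shows "(q / g - u / g - 1) / (q / g - u / g + 1) = (u - q + g) / (u - q - g)"
  using Gd[OF assms, of q u "-1" 1] negfrac[of "u - q + g" "u - q - g"] by (simp add: algebra_simps)
lemma cFP': fixes p u g :: real assumes "g \<noteq> 0"
  shows "(p / g - u / g - 1) / (p / g - u / g + 1) = 1 / ((p - u + g) / (p - u - g))"
  using Gd[OF assms, of p u "-1" 1] by (simp add: algebra_simps)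

lemma pos_ratio_nz: fixes x y :: real assumes "x / y > 0" shows "x \<noteq> 0" "y \<noteq> 0"
  using assms by auto

lemma C_pt:
  fixes \<gamma> a p u q e :: real
  assumes g: "\<gamma> \<noteq> 0"
    and hA: "(u - a - 2 * \<gamma>) / (u - a + 2 * \<gamma>) > 0"
    and hE: "(e - u - 2 * \<gamma>) / (e - u + 2 * \<gamma>) > 0"
    and hP: "(p - u + \<gamma>) / (p - u - \<gamma>) > 0"
    and hQ: "(u - q + \<gamma>) / (u - q - \<gamma>) > 0"
  shows "1 / ((e / \<gamma> - u / \<gamma> + 2) * (q / \<gamma> - u / \<gamma> - 1) * (p / \<gamma> - u / \<gamma> - 1)
                / ((e / \<gamma> - u / \<gamma> - 2) * (q / \<gamma> - u / \<gamma> + 1) * (p / \<gamma> - u / \<gamma> + 1)) - 1)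
       + 1 / ((a / \<gamma> - u / \<gamma> - 2) * (q / \<gamma> - u / \<gamma> + 1) * (p / \<gamma> - u / \<gamma> + 1)
                / ((a / \<gamma> - u / \<gamma> + 2) * (q / \<gamma> - u / \<gamma> - 1) * (p / \<gamma> - u / \<gamma> - 1)) - 1)
    = 1 / (exp (- ln ((u - a - 2 * \<gamma>) / (u - a + 2 * \<gamma>)) + ln ((p - u + \<gamma>) / (p - u - \<gamma>))
                 - ln ((u - q + \<gamma>) / (u - q - \<gamma>))) - 1)
    + 1 / (exp (- ln ((e - u - 2 * \<gamma>) / (e - u + 2 * \<gamma>)) - ln ((p - u + \<gamma>) / (p - u - \<gamma>))
                 + ln ((u - q + \<gamma>) / (u - q - \<gamma>))) - 1)"
proof -
  note nA = pos_ratio_nz[OF hA] and nE = pos_ratio_nz[OF hE] and nP = pos_ratio_nz[OF hP] and nQ = pos_ratio_nz[OF hQ]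
  have eX: "exp (- ln ((u - a - 2 * \<gamma>) / (u - a + 2 * \<gamma>)) + ln ((p - u + \<gamma>) / (p - u - \<gamma>))
                 - ln ((u - q + \<gamma>) / (u - q - \<gamma>)))
     = (1 / ((u - a - 2 * \<gamma>) / (u - a + 2 * \<gamma>))) * ((p - u + \<gamma>) / (p - u - \<gamma>)) * (1 / ((u - q + \<gamma>) / (u - q - \<gamma>)))"
    using hA hP hQ by (simp add: exp_add exp_diff exp_minus exp_ln divide_inverse)
  have eY: "exp (- ln ((e - u - 2 * \<gamma>) / (e - u + 2 * \<gamma>)) - ln ((p - u + \<gamma>) / (p - u - \<gamma>))
                 + ln ((u - q + \<gamma>) / (u - q - \<gamma>)))
     = (1 / ((e - u - 2 * \<gamma>) / (e - u + 2 * \<gamma>))) * (1 / ((p - u + \<gamma>) / (p - u - \<gamma>))) * ((u - q + \<gamma>) / (u - q - \<gamma>))"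
    using hE hP hQ by (simp add: exp_add exp_diff exp_minus exp_ln divide_inverse)
  have FA: "(a / \<gamma> - u / \<gamma> - 2) / (a / \<gamma> - u / \<gamma> + 2) = 1 / ((u - a - 2 * \<gamma>) / (u - a + 2 * \<gamma>))"
    by (rule cFA[OF g])
  have FQ: "(q / \<gamma> - u / \<gamma> + 1) / (q / \<gamma> - u / \<gamma> - 1) = 1 / ((u - q + \<gamma>) / (u - q - \<gamma>))"
    by (rule cFQ[OF g])
  have FP: "(p / \<gamma> - u / \<gamma> + 1) / (p / \<gamma> - u / \<gamma> - 1) = (p - u + \<gamma>) / (p - u - \<gamma>)"
    by (rule cFP[OF g])
  have FE: "(e / \<gamma> - u / \<gamma> + 2) / (e / \<gamma> - u / \<gamma> - 2) = 1 / ((e - u - 2 * \<gamma>) / (e - u + 2 * \<gamma>))"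
    by (rule cFE[OF g])
  have FQ': "(q / \<gamma> - u / \<gamma> - 1) / (q / \<gamma> - u / \<gamma> + 1) = (u - q + \<gamma>) / (u - q - \<gamma>)"
    by (rule cFQ'[OF g])
  have FP': "(p / \<gamma> - u / \<gamma> - 1) / (p / \<gamma> - u / \<gamma> + 1) = 1 / ((p - u + \<gamma>) / (p - u - \<gamma>))"
    by (rule cFP'[OF g])
  have RX: "(a / \<gamma> - u / \<gamma> - 2) * (q / \<gamma> - u / \<gamma> + 1) * (p / \<gamma> - u / \<gamma> + 1)
                / ((a / \<gamma> - u / \<gamma> + 2) * (q / \<gamma> - u / \<gamma> - 1) * (p / \<gamma> - u / \<gamma> - 1))
     = exp (- ln ((u - a - 2 * \<gamma>) / (u - a + 2 * \<gamma>)) + ln ((p - u + \<gamma>) / (p - u - \<gamma>))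
                 - ln ((u - q + \<gamma>) / (u - q - \<gamma>)))"
    unfolding eX times_divide_times_eq[symmetric] FA FQ FP by (simp only: mult_ac)
  have RY: "(e / \<gamma> - u / \<gamma> + 2) * (q / \<gamma> - u / \<gamma> - 1) * (p / \<gamma> - u / \<gamma> - 1)
                / ((e / \<gamma> - u / \<gamma> - 2) * (q / \<gamma> - u / \<gamma> + 1) * (p / \<gamma> - u / \<gamma> + 1))
     = exp (- ln ((e - u - 2 * \<gamma>) / (e - u + 2 * \<gamma>)) - ln ((p - u + \<gamma>) / (p - u - \<gamma>))
                 + ln ((u - q + \<gamma>) / (u - q - \<gamma>)))"
    unfolding eY times_divide_times_eq[symmetric] FE FQ' FP' by (simp only: mult_ac)
  show ?thesis unfolding RX RY by (simp only: add.commute)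
qed

lemma caseC:
  fixes \<gamma> :: real assumes g: "\<gamma> \<noteq> 0"
  shows "point_equivalent
     (\<lambda>x. ln ((x - 2 * \<gamma>) / (x + 2 * \<gamma>))) {x. x + 2 * \<gamma> \<noteq> 0 \<and> (x - 2 * \<gamma>) / (x + 2 * \<gamma>) > 0}
     (\<lambda>x. ln ((x + \<gamma>) / (x - \<gamma>))) {x. x - \<gamma> \<noteq> 0 \<and> (x + \<gamma>) / (x - \<gamma>) > 0}
     (\<lambda>x. 1 / (exp x - 1)) {x. exp x - 1 \<noteq> 0} (1/4)
     (\<lambda>v. 1 / ((v 2 - v 0 + 2) * (v 1 - v 0 - 1) * (v (-1) - v 0 - 1)
                / ((v 2 - v 0 - 2) * (v 1 - v 0 + 1) * (v (-1) - v 0 + 1)) - 1)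
         + 1 / ((v (-2) - v 0 - 2) * (v 1 - v 0 + 1) * (v (-1) - v 0 + 1)
                / ((v (-2) - v 0 + 2) * (v 1 - v 0 - 1) * (v (-1) - v 0 - 1)) - 1))"
proof (rule pe_intro[where \<phi>="\<lambda>x. x / \<gamma>" and \<phi>'="\<lambda>x. 1 / \<gamma>" and \<psi>="\<lambda>x. \<gamma> * x" and c="4*\<gamma>"])
  fix v :: "int \<Rightarrow> real"
  assume "admissible (\<lambda>x. ln ((x - 2 * \<gamma>) / (x + 2 * \<gamma>))) {x. x + 2 * \<gamma> \<noteq> 0 \<and> (x - 2 * \<gamma>) / (x + 2 * \<gamma>) > 0}
     (\<lambda>x. ln ((x + \<gamma>) / (x - \<gamma>))) {x. x - \<gamma> \<noteq> 0 \<and> (x + \<gamma>) / (x - \<gamma>) > 0}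
     {x. exp x - 1 \<noteq> 0} v"
  then show "1 / ((v 2 / \<gamma> - v 0 / \<gamma> + 2) * (v 1 / \<gamma> - v 0 / \<gamma> - 1) * (v (-1) / \<gamma> - v 0 / \<gamma> - 1)
                / ((v 2 / \<gamma> - v 0 / \<gamma> - 2) * (v 1 / \<gamma> - v 0 / \<gamma> + 1) * (v (-1) / \<gamma> - v 0 / \<gamma> + 1)) - 1)
         + 1 / ((v (-2) / \<gamma> - v 0 / \<gamma> - 2) * (v 1 / \<gamma> - v 0 / \<gamma> + 1) * (v (-1) / \<gamma> - v 0 / \<gamma> + 1)
                / ((v (-2) / \<gamma> - v 0 / \<gamma> + 2) * (v 1 / \<gamma> - v 0 / \<gamma> - 1) * (v (-1) / \<gamma> - v 0 / \<gamma> - 1)) - 1)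
     = 1 / 4 * (4 * \<gamma>) * (1 / \<gamma>) * lattice_rhs (\<lambda>x. ln ((x - 2 * \<gamma>) / (x + 2 * \<gamma>))) (\<lambda>x. ln ((x + \<gamma>) / (x - \<gamma>))) (\<lambda>x. 1 / (exp x - 1)) v"
    unfolding lattice_rhs_def admissible_def using g C_pt[OF g, of "v 0" "v (-2)" "v 2" "v (-1)" "v 1"]
    by simp
next
  fix x :: real
  show "\<exists>a b. a < x / \<gamma> \<and> x / \<gamma> < b \<and> (\<forall>y. a < y \<and> y < b \<longrightarrow> \<gamma> * y / \<gamma> = y)"
    using g by (auto intro: lt_ex gt_ex)
qed (use g in \<open>auto intro!: derivative_eq_intros\<close>)

lemma I_rat:
  fixes g U P Q A E :: real
  assumes g: "g \<noteq> 0" "g\<^sup>2 \<noteq> 1" and pos: "U > 0" "P > 0" "Q > 0" "A > 0" "E > 0"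
    and hA: "(U / A / g\<^sup>2 - 1) / (U / A - 1 / g\<^sup>2) > 0"
    and hE: "(E / U / g\<^sup>2 - 1) / (E / U - 1 / g\<^sup>2) > 0"
    and hP: "(g * (P / U) - 1) / (P / U - g) > 0"
    and hQ: "(g * (U / Q) - 1) / (U / Q - g) > 0"
    and hX: "1 / ((U / A / g\<^sup>2 - 1) / (U / A - 1 / g\<^sup>2)) * ((g * (P / U) - 1) / (P / U - g))
               * (1 / ((g * (U / Q) - 1) / (U / Q - g))) - 1 \<noteq> 0"
    and hY: "1 / ((E / U / g\<^sup>2 - 1) / (E / U - 1 / g\<^sup>2)) * (1 / ((g * (P / U) - 1) / (P / U - g)))
               * ((g * (U / Q) - 1) / (U / Q - g)) - 1 \<noteq> 0"
  shows "(U - g * P) * (U - g * Q) * (U - E / g\<^sup>2)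
           / ((g * P - U) * (g * Q - E) - (g * U - Q) * (P - g * E))
         - (U - P / g) * (U - Q / g) * (U - g\<^sup>2 * A)
           / ((g * A - P) * (g * U - Q) - (g * P - U) * (A - g * Q))
    = (1 - g\<^sup>2) / g\<^sup>2 * U *
      (1 / (1 / ((U / A / g\<^sup>2 - 1) / (U / A - 1 / g\<^sup>2)) * ((g * (P / U) - 1) / (P / U - g))
               * (1 / ((g * (U / Q) - 1) / (U / Q - g))) - 1)
     + 1 / (1 / ((E / U / g\<^sup>2 - 1) / (E / U - 1 / g\<^sup>2)) * (1 / ((g * (P / U) - 1) / (P / U - g)))
               * ((g * (U / Q) - 1) / (U / Q - g)) - 1))"
proof -
  have g2: "g\<^sup>2 \<noteq> 0" using g by simp
  have r1: "(U / A / g\<^sup>2 - 1) / (U / A - 1 / g\<^sup>2) = (U - g\<^sup>2 * A) / (g\<^sup>2 * U - A)"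
  proof -
    have "U / A / g\<^sup>2 - 1 = (U - g\<^sup>2 * A) / (A * g\<^sup>2)" "U / A - 1 / g\<^sup>2 = (g\<^sup>2 * U - A) / (A * g\<^sup>2)"
      using g2 pos by (simp_all add: field_simps)
    then show ?thesis using g2 pos by simp
  qed
  have r2: "(E / U / g\<^sup>2 - 1) / (E / U - 1 / g\<^sup>2) = (E - g\<^sup>2 * U) / (g\<^sup>2 * E - U)"
  proof -
    have "E / U / g\<^sup>2 - 1 = (E - g\<^sup>2 * U) / (U * g\<^sup>2)" "E / U - 1 / g\<^sup>2 = (g\<^sup>2 * E - U) / (U * g\<^sup>2)"
      using g2 pos by (simp_all add: field_simps)
    then show ?thesis using g2 pos by simp
  qed
  have r3: "(g * (P / U) - 1) / (P / U - g) = (g * P - U) / (P - g * U)"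
  proof -
    have "g * (P / U) - 1 = (g * P - U) / U" "P / U - g = (P - g * U) / U"
      using pos by (simp_all add: field_simps)
    then show ?thesis using pos by simp
  qed
  have r4: "(g * (U / Q) - 1) / (U / Q - g) = (g * U - Q) / (U - g * Q)"
  proof -
    have "g * (U / Q) - 1 = (g * U - Q) / Q" "U / Q - g = (U - g * Q) / Q"
      using pos by (simp_all add: field_simps)
    then show ?thesis using pos by simp
  qed
  note n1 = pos_ratio_nz[OF hA[unfolded r1]] and n2 = pos_ratio_nz[OF hE[unfolded r2]]
   and n3 = pos_ratio_nz[OF hP[unfolded r3]] and n4 = pos_ratio_nz[OF hQ[unfolded r4]]
  define NX where "NX = (g\<^sup>2 * U - A) * (g * P - U) * (U - g * Q)"
  define DX where "DX = (U - g\<^sup>2 * A) * (P - g * U) * (g * U - Q)"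
  define NY where "NY = (g\<^sup>2 * E - U) * (P - g * U) * (g * U - Q)"
  define DY where "DY = (E - g\<^sup>2 * U) * (g * P - U) * (U - g * Q)"
  define D1 where "D1 = (g * P - U) * (g * Q - E) - (g * U - Q) * (P - g * E)"
  define D2 where "D2 = (g * A - P) * (g * U - Q) - (g * P - U) * (A - g * Q)"
  have DXnz: "DX \<noteq> 0" and DYnz: "DY \<noteq> 0" unfolding DX_def DY_def using n1 n2 n3 n4 by auto
  have eX: "1 / ((U - g\<^sup>2 * A) / (g\<^sup>2 * U - A)) * ((g * P - U) / (P - g * U)) * (1 / ((g * U - Q) / (U - g * Q))) = NX / DX"
    unfolding NX_def DX_def by simp
  have eY: "1 / ((E - g\<^sup>2 * U) / (g\<^sup>2 * E - U)) * (1 / ((g * P - U) / (P - g * U))) * ((g * U - Q) / (U - g * Q)) = NY / DY"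
    unfolding NY_def DY_def by simp
  have pX: "NX - DX = (1 - g\<^sup>2) * U * D2" unfolding NX_def DX_def D2_def by (simp add: power2_eq_square algebra_simps)
  have pY: "NY - DY = (1 - g\<^sup>2) * U * D1" unfolding NY_def DY_def D1_def by (simp add: power2_eq_square algebra_simps)
  have hX': "NX / DX - 1 \<noteq> 0" using hX unfolding r1 r3 r4 eX .
  have hY': "NY / DY - 1 \<noteq> 0" using hY unfolding r2 r3 r4 eY .
  have NXD: "NX - DX \<noteq> 0" using hX' DXnz by (simp add: field_simps)
  have NYD: "NY - DY \<noteq> 0" using hY' DYnz by (simp add: field_simps)
  have g1: "1 - g\<^sup>2 \<noteq> 0" using g by simp
  have D2nz: "D2 \<noteq> 0" using NXD pX by auto
  have D1nz: "D1 \<noteq> 0" using NYD pY by auto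
  have bX: "1 / (NX / DX - 1) = DX / ((1 - g\<^sup>2) * U * D2)"
    unfolding pX[symmetric] using DXnz NXD by (simp add: field_simps)
  have bY: "1 / (NY / DY - 1) = DY / ((1 - g\<^sup>2) * U * D1)"
    unfolding pY[symmetric] using DYnz NYD by (simp add: field_simps)
  have S1: "(U - g * P) * (U - g * Q) * (U - E / g\<^sup>2) / D1 = (1 - g\<^sup>2) / g\<^sup>2 * U * (DY / ((1 - g\<^sup>2) * U * D1))"
    unfolding DY_def using g g2 g1 D1nz pos by (simp add: field_simps power2_eq_square) 
  have S2: "- ((U - P / g) * (U - Q / g) * (U - g\<^sup>2 * A) / D2) = (1 - g\<^sup>2) / g\<^sup>2 * U * (DX / ((1 - g\<^sup>2) * U * D2))"
    unfolding DX_def using g g2 g1 D2nz pos by (simp add: field_simps power2_eq_square)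
  show ?thesis unfolding r1 r2 r3 r4 eX eY bX bY D1_def[symmetric] D2_def[symmetric]
    using S1 S2 by (simp add: algebra_simps)
qed

lemma I_pt:
  fixes \<gamma> a p u q e :: real
  assumes g: "\<gamma> \<noteq> 0" "\<gamma>\<^sup>2 \<noteq> 1"
    and hA: "(exp (u - a) / \<gamma>\<^sup>2 - 1) / (exp (u - a) - 1 / \<gamma>\<^sup>2) > 0"
    and hE: "(exp (e - u) / \<gamma>\<^sup>2 - 1) / (exp (e - u) - 1 / \<gamma>\<^sup>2) > 0"
    and hP: "(\<gamma> * exp (p - u) - 1) / (exp (p - u) - \<gamma>) > 0"
    and hQ: "(\<gamma> * exp (u - q) - 1) / (exp (u - q) - \<gamma>) > 0"
    and hX: "exp (- ln ((exp (u - a) / \<gamma>\<^sup>2 - 1) / (exp (u - a) - 1 / \<gamma>\<^sup>2))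
                + ln ((\<gamma> * exp (p - u) - 1) / (exp (p - u) - \<gamma>))
                - ln ((\<gamma> * exp (u - q) - 1) / (exp (u - q) - \<gamma>))) - 1 \<noteq> 0"
    and hY: "exp (- ln ((exp (e - u) / \<gamma>\<^sup>2 - 1) / (exp (e - u) - 1 / \<gamma>\<^sup>2))
                - ln ((\<gamma> * exp (p - u) - 1) / (exp (p - u) - \<gamma>))
                + ln ((\<gamma> * exp (u - q) - 1) / (exp (u - q) - \<gamma>))) - 1 \<noteq> 0"
  shows "(exp u - \<gamma> * exp p) * (exp u - \<gamma> * exp q) * (exp u - exp e / \<gamma>\<^sup>2)
           / ((\<gamma> * exp p - exp u) * (\<gamma> * exp q - exp e) - (\<gamma> * exp u - exp q) * (exp p - \<gamma> * exp e))
         - (exp u - exp p / \<gamma>) * (exp u - exp q / \<gamma>) * (exp u - \<gamma>\<^sup>2 * exp a)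
           / ((\<gamma> * exp a - exp p) * (\<gamma> * exp u - exp q) - (\<gamma> * exp p - exp u) * (exp a - \<gamma> * exp q))
    = (1 - \<gamma>\<^sup>2) / \<gamma>\<^sup>2 * exp u *
      (1 / (exp (- ln ((exp (u - a) / \<gamma>\<^sup>2 - 1) / (exp (u - a) - 1 / \<gamma>\<^sup>2))
                + ln ((\<gamma> * exp (p - u) - 1) / (exp (p - u) - \<gamma>))
                - ln ((\<gamma> * exp (u - q) - 1) / (exp (u - q) - \<gamma>))) - 1)
     + 1 / (exp (- ln ((exp (e - u) / \<gamma>\<^sup>2 - 1) / (exp (e - u) - 1 / \<gamma>\<^sup>2))
                - ln ((\<gamma> * exp (p - u) - 1) / (exp (p - u) - \<gamma>))
                + ln ((\<gamma> * exp (u - q) - 1) / (exp (u - q) - \<gamma>))) - 1))"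
proof -
  have eX: "exp (- ln ((exp (u - a) / \<gamma>\<^sup>2 - 1) / (exp (u - a) - 1 / \<gamma>\<^sup>2))
                + ln ((\<gamma> * exp (p - u) - 1) / (exp (p - u) - \<gamma>))
                - ln ((\<gamma> * exp (u - q) - 1) / (exp (u - q) - \<gamma>)))
     = 1 / ((exp (u - a) / \<gamma>\<^sup>2 - 1) / (exp (u - a) - 1 / \<gamma>\<^sup>2)) * ((\<gamma> * exp (p - u) - 1) / (exp (p - u) - \<gamma>))
        * (1 / ((\<gamma> * exp (u - q) - 1) / (exp (u - q) - \<gamma>)))"
    using hA hP hQ by (simp only: exp_add exp_diff exp_minus exp_ln) (simp add: divide_inverse)
  have eY: "exp (- ln ((exp (e - u) / \<gamma>\<^sup>2 - 1) / (exp (e - u) - 1 / \<gamma>\<^sup>2))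
                - ln ((\<gamma> * exp (p - u) - 1) / (exp (p - u) - \<gamma>))
                + ln ((\<gamma> * exp (u - q) - 1) / (exp (u - q) - \<gamma>)))
     = 1 / ((exp (e - u) / \<gamma>\<^sup>2 - 1) / (exp (e - u) - 1 / \<gamma>\<^sup>2)) * (1 / ((\<gamma> * exp (p - u) - 1) / (exp (p - u) - \<gamma>)))
        * ((\<gamma> * exp (u - q) - 1) / (exp (u - q) - \<gamma>))"
    using hE hP hQ by (simp only: exp_add exp_diff exp_minus exp_ln) (simp add: divide_inverse)
  have x: "exp (u - a) = exp u / exp a" "exp (e - u) = exp e / exp u"
     "exp (p - u) = exp p / exp u" "exp (u - q) = exp u / exp q"
    by (simp_all add: exp_diff)
  show ?thesis unfolding eX eY unfolding x
    by (rule I_rat[OF g exp_gt_zero exp_gt_zero exp_gt_zero exp_gt_zero exp_gt_zero])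
       (use hA[unfolded x] hE[unfolded x] hP[unfolded x] hQ[unfolded x]
            hX[unfolded eX, unfolded x] hY[unfolded eY, unfolded x] in blast)+
qed


lemma kc_aux: fixes s :: real assumes "s > 0"
  shows "- 1 / (1 + s) * ((s * s - 1) / s) = (1 - s) / s"
proof -
  have n: "1 + s \<noteq> 0" "s \<noteq> 0" using assms by auto
  have "s * s - 1 = (s - 1) * (1 + s)" by (simp add: algebra_simps)
  then have "- 1 / (1 + s) * ((s * s - 1) / s) = - ((s - 1) * (1 + s)) / ((1 + s) * s)" by simp
  also have "\<dots> = - ((s - 1) / s)" using n by (simp add: mult.commute)
  also have "\<dots> = (1 - s) / s" by (metis minus_diff_eq minus_divide_left)
  finally show ?thesis .
qed

lemma caseI:
  fixes \<gamma> :: real assumes g: "\<gamma> \<noteq> 0"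
  shows "point_equivalent
     (\<lambda>x. ln ((exp x / \<gamma>\<^sup>2 - 1) / (exp x - 1 / \<gamma>\<^sup>2)))
       {x. exp x - 1 / \<gamma>\<^sup>2 \<noteq> 0 \<and> (exp x / \<gamma>\<^sup>2 - 1) / (exp x - 1 / \<gamma>\<^sup>2) > 0}
     (\<lambda>x. ln ((\<gamma> * exp x - 1) / (exp x - \<gamma>)))
       {x. exp x - \<gamma> \<noteq> 0 \<and> (\<gamma> * exp x - 1) / (exp x - \<gamma>) > 0}
     (\<lambda>x. 1 / (exp x - 1)) {x. exp x - 1 \<noteq> 0}
     (- 1 / (1 + \<gamma>\<^sup>2))
     (\<lambda>v. (v 0 - \<gamma> * v (-1)) * (v 0 - \<gamma> * v 1) * (v 0 - v 2 / \<gamma>\<^sup>2)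
           / ((\<gamma> * v (-1) - v 0) * (\<gamma> * v 1 - v 2) - (\<gamma> * v 0 - v 1) * (v (-1) - \<gamma> * v 2))
         - (v 0 - v (-1) / \<gamma>) * (v 0 - v 1 / \<gamma>) * (v 0 - \<gamma>\<^sup>2 * v (-2))
           / ((\<gamma> * v (-2) - v (-1)) * (\<gamma> * v 0 - v 1) - (\<gamma> * v (-1) - v 0) * (v (-2) - \<gamma> * v 1)))"
proof (rule exp_pe[where c = "if \<gamma>\<^sup>2 = 1 then 1 else (\<gamma>\<^sup>2 * \<gamma>\<^sup>2 - 1) / \<gamma>\<^sup>2"])
  have gp: "\<gamma>\<^sup>2 > 0" using g by simp
  show "(if \<gamma>\<^sup>2 = 1 then 1 else (\<gamma>\<^sup>2 * \<gamma>\<^sup>2 - 1) / \<gamma>\<^sup>2) \<noteq> (0::real)"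
  proof (cases "\<gamma>\<^sup>2 = 1")
    case False
    have a: "\<gamma>\<^sup>2 + 1 \<noteq> 0" using gp by linarith
    have b: "\<gamma>\<^sup>2 * \<gamma>\<^sup>2 - 1 = (\<gamma>\<^sup>2 - 1) * (\<gamma>\<^sup>2 + 1)" by (simp add: algebra_simps)
    have "\<gamma>\<^sup>2 * \<gamma>\<^sup>2 - 1 \<noteq> 0" unfolding b using a False by simp
    then show ?thesis using False gp by (simp del: power2_eq_square)
  qed simp
  have "1 + \<gamma>\<^sup>2 \<noteq> 0" using gp by linarith
  then show "- 1 / (1 + \<gamma>\<^sup>2) \<noteq> (0::real)" by simp
next
  fix v :: "int \<Rightarrow> real"
  assume adm: "admissible (\<lambda>x. ln ((exp x / \<gamma>\<^sup>2 - 1) / (exp x - 1 / \<gamma>\<^sup>2)))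
       {x. exp x - 1 / \<gamma>\<^sup>2 \<noteq> 0 \<and> (exp x / \<gamma>\<^sup>2 - 1) / (exp x - 1 / \<gamma>\<^sup>2) > 0}
     (\<lambda>x. ln ((\<gamma> * exp x - 1) / (exp x - \<gamma>)))
       {x. exp x - \<gamma> \<noteq> 0 \<and> (\<gamma> * exp x - 1) / (exp x - \<gamma>) > 0}
     {x. exp x - 1 \<noteq> 0} v"
  have gp: "\<gamma>\<^sup>2 > 0" using g by simp
  show "(exp (v 0) - \<gamma> * exp (v (-1))) * (exp (v 0) - \<gamma> * exp (v 1)) * (exp (v 0) - exp (v 2) / \<gamma>\<^sup>2)
           / ((\<gamma> * exp (v (-1)) - exp (v 0)) * (\<gamma> * exp (v 1) - exp (v 2)) - (\<gamma> * exp (v 0) - exp (v 1)) * (exp (v (-1)) - \<gamma> * exp (v 2)))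
         - (exp (v 0) - exp (v (-1)) / \<gamma>) * (exp (v 0) - exp (v 1) / \<gamma>) * (exp (v 0) - \<gamma>\<^sup>2 * exp (v (-2)))
           / ((\<gamma> * exp (v (-2)) - exp (v (-1))) * (\<gamma> * exp (v 0) - exp (v 1)) - (\<gamma> * exp (v (-1)) - exp (v 0)) * (exp (v (-2)) - \<gamma> * exp (v 1)))
     = - 1 / (1 + \<gamma>\<^sup>2) * (if \<gamma>\<^sup>2 = 1 then 1 else (\<gamma>\<^sup>2 * \<gamma>\<^sup>2 - 1) / \<gamma>\<^sup>2) * exp (v 0) *
       lattice_rhs (\<lambda>x. ln ((exp x / \<gamma>\<^sup>2 - 1) / (exp x - 1 / \<gamma>\<^sup>2))) (\<lambda>x. ln ((\<gamma> * exp x - 1) / (exp x - \<gamma>))) (\<lambda>x. 1 / (exp x - 1)) v"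
  proof (cases "\<gamma>\<^sup>2 = 1")
    case True
    then have "\<gamma> = 1 \<or> \<gamma> = -1" by (simp add: power2_eq_1_iff)
    then have False
    proof
      assume g1: "\<gamma> = 1"
      from adm have h: "exp (v 0 - v (-2)) - 1 \<noteq> 0" "exp (v (-1) - v 0) - 1 \<noteq> 0" "exp (v 0 - v 1) - 1 \<noteq> 0"
        and hb: "exp (- ln ((exp (v 0 - v (-2)) / \<gamma>\<^sup>2 - 1) / (exp (v 0 - v (-2)) - 1 / \<gamma>\<^sup>2))
                 + ln ((\<gamma> * exp (v (-1) - v 0) - 1) / (exp (v (-1) - v 0) - \<gamma>))
                 - ln ((\<gamma> * exp (v 0 - v 1) - 1) / (exp (v 0 - v 1) - \<gamma>))) - 1 \<noteq> 0"
        unfolding admissible_def g1 by auto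
      show False using hb h unfolding g1 by simp
    next
      assume g1: "\<gamma> = -1"
      from adm have h: "(\<gamma> * exp (v (-1) - v 0) - 1) / (exp (v (-1) - v 0) - \<gamma>) > 0"
        unfolding admissible_def by auto
      have "(\<gamma> * exp (v (-1) - v 0) - 1) / (exp (v (-1) - v 0) - \<gamma>) = -1"
      proof -
        have "exp (v (-1) - v 0) + 1 > 0" by (simp add: add_pos_pos)
        then show ?thesis unfolding g1 by (simp add: field_simps)
      qed
      with h show False by simp
    qed
    then show ?thesis ..
  next
    case False
    have kc: "- 1 / (1 + \<gamma>\<^sup>2) * ((\<gamma>\<^sup>2 * \<gamma>\<^sup>2 - 1) / \<gamma>\<^sup>2) = (1 - \<gamma>\<^sup>2) / \<gamma>\<^sup>2"
      using kc_aux[OF gp] .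
    from adm have hA: "(exp (v 0 - v (-2)) / \<gamma>\<^sup>2 - 1) / (exp (v 0 - v (-2)) - 1 / \<gamma>\<^sup>2) > 0"
      and hE: "(exp (v 2 - v 0) / \<gamma>\<^sup>2 - 1) / (exp (v 2 - v 0) - 1 / \<gamma>\<^sup>2) > 0"
      and hP: "(\<gamma> * exp (v (-1) - v 0) - 1) / (exp (v (-1) - v 0) - \<gamma>) > 0"
      and hQ: "(\<gamma> * exp (v 0 - v 1) - 1) / (exp (v 0 - v 1) - \<gamma>) > 0"
      and hX: "exp (- ln ((exp (v 0 - v (-2)) / \<gamma>\<^sup>2 - 1) / (exp (v 0 - v (-2)) - 1 / \<gamma>\<^sup>2))
                + ln ((\<gamma> * exp (v (-1) - v 0) - 1) / (exp (v (-1) - v 0) - \<gamma>))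
                - ln ((\<gamma> * exp (v 0 - v 1) - 1) / (exp (v 0 - v 1) - \<gamma>))) - 1 \<noteq> 0"
      and hY: "exp (- ln ((exp (v 2 - v 0) / \<gamma>\<^sup>2 - 1) / (exp (v 2 - v 0) - 1 / \<gamma>\<^sup>2))
                - ln ((\<gamma> * exp (v (-1) - v 0) - 1) / (exp (v (-1) - v 0) - \<gamma>))
                + ln ((\<gamma> * exp (v 0 - v 1) - 1) / (exp (v 0 - v 1) - \<gamma>))) - 1 \<noteq> 0"
      unfolding admissible_def by auto
    show ?thesis
      unfolding lattice_rhs_def using False kc I_pt[OF g False hA hE hP hQ hX hY]
      by (simp add: mult.assoc)
  qed
qed


theorem mainTheorem4:
  fixes \<gamma> :: real
  assumes "\<gamma> \<noteq> 0"
  shows "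
   \<comment> \<open>Case (A)\<close>
   (point_equivalent (\<lambda>x. - 2 * \<gamma> / x) {x. x \<noteq> 0} (\<lambda>x. \<gamma> / x) {x. x \<noteq> 0}
     (\<lambda>x. 1 / x) {x. x \<noteq> 0} (1/2)
     (\<lambda>v. 1 / (2 / (v 2 - v 0) + 1 / (v 0 - v 1) + 1 / (v 0 - v (-1)))
         - 1 / (2 / (v (-2) - v 0) + 1 / (v 0 - v 1) + 1 / (v 0 - v (-1)))))
   \<and>
   \<comment> \<open>Case (C)\<close>
   (point_equivalent
     (\<lambda>x. ln ((x - 2 * \<gamma>) / (x + 2 * \<gamma>))) {x. x + 2 * \<gamma> \<noteq> 0 \<and> (x - 2 * \<gamma>) / (x + 2 * \<gamma>) > 0}
     (\<lambda>x. ln ((x + \<gamma>) / (x - \<gamma>))) {x. x - \<gamma> \<noteq> 0 \<and> (x + \<gamma>) / (x - \<gamma>) > 0}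
     (\<lambda>x. 1 / (exp x - 1)) {x. exp x - 1 \<noteq> 0} (1/4)
     (\<lambda>v. 1 / ((v 2 - v 0 + 2) * (v 1 - v 0 - 1) * (v (-1) - v 0 - 1)
                / ((v 2 - v 0 - 2) * (v 1 - v 0 + 1) * (v (-1) - v 0 + 1)) - 1)
         + 1 / ((v (-2) - v 0 - 2) * (v 1 - v 0 + 1) * (v (-1) - v 0 + 1)
                / ((v (-2) - v 0 + 2) * (v 1 - v 0 - 1) * (v (-1) - v 0 - 1)) - 1)))
   \<and>
   \<comment> \<open>Case (D)\<close>
   (point_equivalent
     (\<lambda>x. - ln (1 + 1 / x)) {x. x \<noteq> 0 \<and> 1 + 1 / x > 0}
     (\<lambda>x. ln x) {x. x > 0}
     (\<lambda>x. 1 / (exp x + 1)) UNIV 1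
     (\<lambda>v. (v 0 - v (-1)) / (v 1 - v (-1) + (v 0 - v 1) / (v 0 - v 2))
         - (v 0 - v 1) / (v 1 - v (-1) + (v 0 - v (-1)) / (v 0 - v (-2)))))
   \<and>
   \<comment> \<open>Case (F)\<close>
   (point_equivalent
     (\<lambda>x. ln (exp (- x) - 1)) {x. exp (- x) - 1 > 0}
     (\<lambda>x. ln (exp x - 1)) {x. exp x - 1 > 0}
     (\<lambda>x. exp (- x)) UNIV 1
     (\<lambda>v. v 0 * ((1 - v 0 / v 2) * (1 - v (-1) / v 0)) / (1 - v 0 / v 1)
         + v 0 * ((1 - v (-2) / v 0) * (1 - v 0 / v 1)) / (1 - v (-1) / v 0)))
   \<and>
   \<comment> \<open>Case (H) at parameter 0\<close>
   (point_equivalent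
     (\<lambda>x. ln (exp (- x) - 1)) {x. exp (- x) - 1 > 0}
     (\<lambda>x. ln (exp x + 1)) {x. exp x + 1 > 0}
     (\<lambda>x. exp (- x)) UNIV 1
     (\<lambda>v. v 0 * ((1 - v 0 / v 2) * (1 + v (-1) / v 0)) / (1 + v 0 / v 1)
         + v 0 * ((1 - v (-2) / v 0) * (1 + v 0 / v 1)) / (1 + v (-1) / v 0)))
   \<and>
   \<comment> \<open>Case (I)\<close>
   (point_equivalent
     (\<lambda>x. ln ((exp x / \<gamma>\<^sup>2 - 1) / (exp x - 1 / \<gamma>\<^sup>2)))
       {x. exp x - 1 / \<gamma>\<^sup>2 \<noteq> 0 \<and> (exp x / \<gamma>\<^sup>2 - 1) / (exp x - 1 / \<gamma>\<^sup>2) > 0}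
     (\<lambda>x. ln ((\<gamma> * exp x - 1) / (exp x - \<gamma>)))
       {x. exp x - \<gamma> \<noteq> 0 \<and> (\<gamma> * exp x - 1) / (exp x - \<gamma>) > 0}
     (\<lambda>x. 1 / (exp x - 1)) {x. exp x - 1 \<noteq> 0}
     (- 1 / (1 + \<gamma>\<^sup>2))
     (\<lambda>v. (v 0 - \<gamma> * v (-1)) * (v 0 - \<gamma> * v 1) * (v 0 - v 2 / \<gamma>\<^sup>2)
           / ((\<gamma> * v (-1) - v 0) * (\<gamma> * v 1 - v 2) - (\<gamma> * v 0 - v 1) * (v (-1) - \<gamma> * v 2))
         - (v 0 - v (-1) / \<gamma>) * (v 0 - v 1 / \<gamma>) * (v 0 - \<gamma>\<^sup>2 * v (-2))
           / ((\<gamma> * v (-2) - v (-1)) * (\<gamma> * v 0 - v 1) - (\<gamma> * v (-1) - v 0) * (v (-2) - \<gamma> * v 1))))"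
    using caseA[OF assms] caseC[OF assms] caseD caseF caseH caseI[OF assms] by blast

end
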